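(* Let $K_{m_1,m_2}$ be the complete bipartite graph with bipartition $(X,Y)$, $X=\{x_1,\dots,x_{m_1}\}$, $Y=\{y_1,\dots,y_{m_2}\}$, where $2\le m_1\le m_2$. Let $s$ and $i$ be integers with $\max\{1,s-m_2\}\le i\le \min\{m_1,s-1\}$ and $s\ge m_2-m_1+3$, and let $S_i=\{x_1,\dots,x_i,y_1,\dots,y_{s-i}\}$. If $2i> m_1+s-m_2$, then $$\kappa^*_{K_{m_1,m_2}}(S_i)\ge\begin{cases} m_1-i+\left\lfloor\frac{i}{2}\right\rfloor, & \text{if } m_1+s-m_2<2i\le \frac{4(m_1+s-m_2)}{3},\\[2pt] m_2-s+i, & \text{if } \frac{4(m_1+s-m_2)}{3}<2i\le 2(m_1+s-m_2),\\[2pt] m_1, & \text{if } 2i>2(m_1+s-m_2).\end{cases}$$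
   Context: For $S\subseteq V(G)$ with $|S|\ge 2$, an $S$-Steiner tree of $G$ is a subtree $T$ of $G$ with $S\subseteq V(T)$ all of whose leaves belong to $S$. A family of $S$-Steiner trees $T_1,\dots,T_k$ is completely independent if for all $1\le p<q\le k$: $E(T_p)\cap E(T_q)=\emptyset$, $V(T_p)\cap V(T_q)=S$, and for any two vertices $x_1,x_2\in S$ the $(x_1,x_2)$-paths in $T_p$ and in $T_q$ are internally disjoint. $\kappa^*_G(S)$ is the maximum number of trees in a completely independent family of $S$-Steiner trees in $G$. *)

theory Defs
  imports Main
begin

type_synonym 'a graph = "'a set \<times> 'a set set"

definition verts :: "'a graph \<Rightarrow> 'a set" where "verts G = fst G"
definition edges :: "'a graph \<Rightarrow> 'a set set" where "edges G = snd G"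

definition is_graph :: "'a graph \<Rightarrow> bool" where
  "is_graph G \<longleftrightarrow> finite (verts G) \<and>
     (\<forall>e\<in>edges G. \<exists>u v. e = {u, v} \<and> u \<noteq> v \<and> u \<in> verts G \<and> v \<in> verts G)"

definition subgraph :: "'a graph \<Rightarrow> 'a graph \<Rightarrow> bool" where
  "subgraph T G \<longleftrightarrow> is_graph T \<and> verts T \<subseteq> verts G \<and> edges T \<subseteq> edges G"

definition is_path :: "'a graph \<Rightarrow> 'a \<Rightarrow> 'a \<Rightarrow> 'a list \<Rightarrow> bool" where
  "is_path H x y P \<longleftrightarrow> P \<noteq> [] \<and> hd P = x \<and> last P = y \<and> distinct P \<and>
     set P \<subseteq> verts H \<and> (\<forall>j. Suc j < length P \<longrightarrow> {P ! j, P ! Suc j} \<in> edges H)"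

definition internal :: "'a list \<Rightarrow> 'a set" where
  "internal P = set (butlast (tl P))"

definition connected_graph :: "'a graph \<Rightarrow> bool" where
  "connected_graph H \<longleftrightarrow> (\<forall>x\<in>verts H. \<forall>y\<in>verts H. \<exists>P. is_path H x y P)"

definition is_cycle :: "'a graph \<Rightarrow> 'a list \<Rightarrow> bool" where
  "is_cycle H C \<longleftrightarrow> length C \<ge> 3 \<and> is_path H (hd C) (last C) C \<and> {last C, hd C} \<in> edges H"

definition is_tree :: "'a graph \<Rightarrow> bool" where
  "is_tree H \<longleftrightarrow> is_graph H \<and> verts H \<noteq> {} \<and> connected_graph H \<and> (\<nexists>C. is_cycle H C)"

definition degree :: "'a graph \<Rightarrow> 'a \<Rightarrow> nat" where
  "degree H v = card {e \<in> edges H. v \<in> e}"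

definition leaves :: "'a graph \<Rightarrow> 'a set" where
  "leaves H = {v \<in> verts H. degree H v = 1}"

definition steiner_tree :: "'a graph \<Rightarrow> 'a set \<Rightarrow> 'a graph \<Rightarrow> bool" where
  "steiner_tree G S T \<longleftrightarrow> subgraph T G \<and> is_tree T \<and> S \<subseteq> verts T \<and> leaves T \<subseteq> S"

definition compl_indep_family :: "'a graph \<Rightarrow> 'a set \<Rightarrow> nat \<Rightarrow> (nat \<Rightarrow> 'a graph) \<Rightarrow> bool" where
  "compl_indep_family G S k T \<longleftrightarrow>
     (\<forall>p<k. steiner_tree G S (T p)) \<and>
     (\<forall>p q. p < q \<and> q < k \<longrightarrow>
        edges (T p) \<inter> edges (T q) = {} \<and>
        verts (T p) \<inter> verts (T q) = S \<and>
        (\<forall>x1\<in>S. \<forall>x2\<in>S. \<forall>P Q. is_path (T p) x1 x2 P \<and> is_path (T q) x1 x2 Q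
            \<longrightarrow> internal P \<inter> internal Q = {}))"

definition kappa_star :: "'a graph \<Rightarrow> 'a set \<Rightarrow> nat" where
  "kappa_star G S = Sup {k. \<exists>T. compl_indep_family G S k T}"

text \<open>Complete bipartite graph K_{m1,m2} with X = {Inl 1..Inl m1}, Y = {Inr 1..Inr m2}.\<close>
definition complete_bipartite :: "nat \<Rightarrow> nat \<Rightarrow> (nat + nat) graph" where
  "complete_bipartite m1 m2 =
     (Inl ` {1..m1} \<union> Inr ` {1..m2},
      {{Inl a, Inr b} | a b. a \<in> {1..m1} \<and> b \<in> {1..m2}})"

definition S_set :: "nat \<Rightarrow> nat \<Rightarrow> (nat + nat) set" where
  "S_set s i = Inl ` {1..i} \<union> Inr ` {1..s - i}"

end

theory Submission
  imports Defs
begin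


definition addstar :: "'a graph \<Rightarrow> 'a \<Rightarrow> 'a set \<Rightarrow> 'a graph" where
  "addstar G c L = (verts G \<union> L, edges G \<union> (\<lambda>l. {c,l}) ` L)"

lemma verts_addstar[simp]: "verts (addstar G c L) = verts G \<union> L"
  by (simp add: addstar_def verts_def)
lemma edges_addstar[simp]: "edges (addstar G c L) = edges G \<union> (\<lambda>l. {c,l}) ` L"
  by (simp add: addstar_def edges_def)

definition hub :: "'a graph \<Rightarrow> 'a \<Rightarrow> bool" where
  "hub H v \<longleftrightarrow> (\<exists>a b. a \<noteq> b \<and> {v,a} \<in> edges H \<and> {v,b} \<in> edges H)"

lemma hubI: "a \<noteq> b \<Longrightarrow> {v,a} \<in> edges H \<Longrightarrow> {v,b} \<in> edges H \<Longrightarrow> hub H v"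
  unfolding hub_def by blast

lemma path_mono:
  assumes "is_path H x y P" "verts H \<subseteq> verts H'" "edges H \<subseteq> edges H'"
  shows "is_path H' x y P"
  using assms unfolding is_path_def by blast

lemma path_rev:
  assumes "is_path H x y P"
  shows "is_path H y x (rev P)"
proof -
  have e: "{rev P ! j, rev P ! Suc j} \<in> edges H" if j: "Suc j < length P" for j
  proof -
    define k where "k = length P - Suc (Suc j)"
    have k1: "rev P ! j = P ! Suc k" using j by (simp add: rev_nth k_def Suc_diff_Suc)
    have k2: "rev P ! Suc j = P ! k" using j by (simp add: rev_nth k_def)
    have "Suc k < length P" using j k_def by simp
    then have "{P ! k, P ! Suc k} \<in> edges H" using assms unfolding is_path_def by blast
    then show ?thesis using k1 k2 by (simp add: insert_commute)
  qed
  show ?thesis using assms e unfolding is_path_def by (auto simp: hd_rev last_rev)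
qed

lemma path_internal_hub:
  assumes "is_path H x y P" "v \<in> internal P"
  shows "hub H v"
proof -
  from assms(2) obtain j where j: "j < length (butlast (tl P))" "v = butlast (tl P) ! j"
    unfolding internal_def by (auto simp: in_set_conv_nth)
  have len: "Suc (Suc j) < length P" using j(1) by simp
  have v: "v = P ! Suc j" using j len by (simp add: nth_butlast nth_tl)
  have d: "distinct P" using assms(1) unfolding is_path_def by blast
  have e1: "{P ! j, P ! Suc j} \<in> edges H" using assms(1) len unfolding is_path_def by auto
  have e2: "{P ! Suc j, P ! Suc (Suc j)} \<in> edges H" using assms(1) len unfolding is_path_def by auto
  have ne: "P ! j \<noteq> P ! Suc (Suc j)" using d len by (simp add: nth_eq_iff_index_eq)
  show ?thesis using hubI[OF ne, of v H] e1 e2 v by (simp add: insert_commute)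
qed

lemma cycle_hub:
  assumes "is_cycle H C" "v \<in> set C"
  shows "hub H v"
proof -
  have len: "length C \<ge> 3" and p: "is_path H (hd C) (last C) C" and cl: "{last C, hd C} \<in> edges H"
    using assms(1) unfolding is_cycle_def by auto
  have d: "distinct C" using p unfolding is_path_def by blast
  have ed: "\<And>j. Suc j < length C \<Longrightarrow> {C ! j, C ! Suc j} \<in> edges H" using p unfolding is_path_def by blast
  obtain j where j: "j < length C" "v = C ! j" using assms(2) by (auto simp: in_set_conv_nth)
  have hdC: "hd C = C ! 0" using len by (cases C) auto
  have lastC: "last C = C ! (length C - 1)" using len by (cases C rule: rev_cases) auto
  have neq: "\<And>a b. a < length C \<Longrightarrow> b < length C \<Longrightarrow> a \<noteq> b \<Longrightarrow> C ! a \<noteq> C ! b"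
    using d nth_eq_iff_index_eq by blast
  show ?thesis
  proof (cases "j = 0")
    case True
    have "{v, C ! 1} \<in> edges H" using ed[of 0] len True j by auto
    moreover have "{v, C ! (length C - 1)} \<in> edges H" using cl True j hdC lastC by (simp add: insert_commute)
    moreover have "C ! 1 \<noteq> C ! (length C - 1)" using neq len by auto
    ultimately show ?thesis by (metis hubI)
  next
    case False
    then obtain k where k: "j = Suc k" by (cases j) auto
    have a: "{v, C ! k} \<in> edges H" using ed[of k] j k by (simp add: insert_commute)
    show ?thesis
    proof (cases "Suc j < length C")
      case True
      have "{v, C ! Suc j} \<in> edges H" using ed[of j] True j by auto
      moreover have "C ! k \<noteq> C ! Suc j" using neq True k by auto
      ultimately show ?thesis using a by (metis hubI)
    next
      case False
      then have jl: "j = length C - 1" using j by auto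
      have "{v, C ! 0} \<in> edges H" using cl jl j hdC lastC by simp
      moreover have "k \<noteq> 0" using len k jl by simp
      moreover have "C ! k \<noteq> C ! 0" using neq[of k 0] len k jl by linarith
      ultimately show ?thesis using a by (metis hubI)
    qed
  qed
qed

lemma graph_edge_verts:
  assumes "is_graph G" "e \<in> edges G" "v \<in> e" shows "v \<in> verts G"
proof -
  obtain u w where "e = {u,w}" "u \<in> verts G" "w \<in> verts G"
    using assms(1,2) unfolding is_graph_def by meson
  then show ?thesis using assms(3) by auto
qed

lemma tree_addleaf:
  assumes T: "is_tree T" and c: "c \<in> verts T" and l: "l \<notin> verts T"
  shows "is_tree (addstar T c {l})"
proof -
  let ?T = "addstar T c {l}"
  have g: "is_graph T" and con: "connected_graph T" and nc: "\<nexists>C. is_cycle T C"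
    using T unfolding is_tree_def by auto
  have cl: "c \<noteq> l" using c l by auto
  have V: "verts ?T = insert l (verts T)" and E: "edges ?T = insert {c,l} (edges T)" by auto
  have gT: "is_graph ?T" using g cl c unfolding is_graph_def V E by blast
  have lnot: "\<And>e. e \<in> edges T \<Longrightarrow> l \<notin> e" using g l graph_edge_verts by metis
  have fromc: "\<exists>P. is_path ?T l y P" if y: "y \<in> verts T" for y
  proof -
    obtain Q where Q: "is_path T c y Q" using con c y unfolding connected_graph_def by blast
    have Q': "is_path ?T c y Q" by (rule path_mono[OF Q]) auto
    have lQ: "l \<notin> set Q" using Q l unfolding is_path_def by auto
    have hdQ: "hd Q = c" and Qne: "Q \<noteq> []" using Q unfolding is_path_def by auto
    have "is_path ?T l y (l # Q)"
      unfolding is_path_def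
    proof (intro conjI allI impI)
      show "last (l # Q) = y" using Q Qne unfolding is_path_def by simp
      show "distinct (l # Q)" using Q lQ unfolding is_path_def by simp
      show "set (l # Q) \<subseteq> verts ?T" using Q' unfolding is_path_def V by auto
      fix j assume j: "Suc j < length (l # Q)"
      show "{(l # Q) ! j, (l # Q) ! Suc j} \<in> edges ?T"
      proof (cases j)
        case 0 then show ?thesis using hdQ Qne by (simp add: hd_conv_nth insert_commute)
      next
        case (Suc k) then show ?thesis using Q' j unfolding is_path_def by simp
      qed
    qed simp_all
    then show ?thesis by blast
  qed
  have conT: "connected_graph ?T"
    unfolding connected_graph_def
  proof (intro ballI)
    fix x y assume x: "x \<in> verts ?T" and y: "y \<in> verts ?T"
    show "\<exists>P. is_path ?T x y P"
    proof (cases "x = l")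
      case True
      show ?thesis
      proof (cases "y = l")
        case True
        have "is_path ?T l l [l]" unfolding is_path_def by simp
        then show ?thesis using \<open>x = l\<close> True by blast
      next
        case False
        then have "y \<in> verts T" using y by simp
        then obtain P where "is_path ?T l y P" using fromc by blast
        then show ?thesis using \<open>x = l\<close> by blast
      qed
    next
      case False
      then have xT: "x \<in> verts T" using x by auto
      show ?thesis
      proof (cases "y = l")
        case True
        obtain P where "is_path ?T l x P" using fromc xT by blast
        then show ?thesis using path_rev[of ?T l x P] True by blast
      next
        case False
        then have yT: "y \<in> verts T" using y by auto
        obtain P where "is_path T x y P" using con xT yT unfolding connected_graph_def by blast
        then have "is_path ?T x y P" by (rule path_mono) auto
        then show ?thesis by blast
      qed
    qed
  qed
  have nhub: "\<not> hub ?T l"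
  proof
    assume "hub ?T l"
    then obtain a b where ab: "a \<noteq> b" "{l,a} \<in> edges ?T" "{l,b} \<in> edges ?T" unfolding hub_def by blast
    have "a = c" using ab(2) lnot cl by (auto simp: doubleton_eq_iff)
    moreover have "b = c" using ab(3) lnot cl by (auto simp: doubleton_eq_iff)
    ultimately show False using ab(1) by simp
  qed
  have ncT: "\<nexists>C. is_cycle ?T C"
  proof
    assume "\<exists>C. is_cycle ?T C"
    then obtain C where C: "is_cycle ?T C" by blast
    show False
    proof (cases "l \<in> set C")
      case True
      have "hub ?T l" by (rule cycle_hub[OF C True])
      then show False using nhub by simp
    next
      case False
      have len: "length C \<ge> 3" and p: "is_path ?T (hd C) (last C) C" and cl': "{last C, hd C} \<in> edges ?T"
        using C unfolding is_cycle_def by auto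
      have Cne: "C \<noteq> []" using len by auto
      have sC: "set C \<subseteq> verts T" using p False unfolding is_path_def V by auto
      have edC: "{C ! j, C ! Suc j} \<in> edges T" if j: "Suc j < length C" for j
      proof -
        have "{C ! j, C ! Suc j} \<in> edges ?T" using p j unfolding is_path_def by blast
        moreover have "C ! j \<in> set C" "C ! Suc j \<in> set C" using j by auto
        ultimately show ?thesis using False E by (auto simp: doubleton_eq_iff)
      qed
      have "last C \<in> set C" "hd C \<in> set C" using Cne by auto
      then have clT: "{last C, hd C} \<in> edges T" using cl' False E by (auto simp: doubleton_eq_iff)
      have "is_path T (hd C) (last C) C" using p sC edC unfolding is_path_def by blast
      then have "is_cycle T C" using len clT unfolding is_cycle_def by blast
      then show False using nc by blast
    qed
  qed
  have "verts ?T \<noteq> {}" using V by blast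
  then show ?thesis unfolding is_tree_def using gT conT ncT by blast
qed

lemma addstar_insert: "addstar T c (insert l L) = addstar (addstar T c L) c {l}"
  unfolding addstar_def verts_def edges_def by auto

lemma addstar_empty: "addstar T c {} = T"
  unfolding addstar_def verts_def edges_def by simp

lemma tree_addstar:
  assumes "finite L" "is_tree T" "c \<in> verts T" "L \<inter> verts T = {}"
  shows "is_tree (addstar T c L)"
  using assms
proof (induction L rule: finite_induct)
  case empty then show ?case by (simp add: addstar_empty)
next
  case (insert l F)
  have A: "is_tree (addstar T c F)" using insert.prems by (intro insert.IH) auto
  have B: "c \<in> verts (addstar T c F)" using insert.prems by simp
  have C0: "l \<notin> verts T" using insert.prems(3) by blast
  have C: "l \<notin> verts (addstar T c F)" using C0 insert.hyps(2) by simp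
  have "is_tree (addstar (addstar T c F) c {l})" by (rule tree_addleaf[OF A B C])
  then show ?case by (simp only: addstar_insert[of T c l F])
qed

lemma hub_addstar:
  assumes g: "is_graph T" and L: "L \<inter> verts T = {}" and h: "hub (addstar T c L) v"
  shows "hub T v \<or> v = c"
proof (rule ccontr)
  assume nv: "\<not> (hub T v \<or> v = c)"
  obtain a b where ab: "a \<noteq> b" "{v,a} \<in> edges (addstar T c L)" "{v,b} \<in> edges (addstar T c L)"
    using h unfolding hub_def by blast
  have new: "v \<in> L \<and> x = c" if "{v,x} \<in> (\<lambda>l. {c,l}) ` L" for x
    using that nv by (auto simp: doubleton_eq_iff)
  have old: "v \<in> verts T" if "{v,x} \<in> edges T" for x
    using graph_edge_verts[OF g that] by simp
  show False
  proof (cases "{v,a} \<in> edges T")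
    case True
    then have vT: "v \<in> verts T" by (rule old)
    have "{v,b} \<in> edges T" using ab(3) new[of b] vT L by auto
    then show False using True ab(1) nv hubI by metis
  next
    case False
    then have "v \<in> L" "a = c" using ab(2) new[of a] by auto
    moreover have "{v,b} \<notin> edges T" using old[of b] \<open>v \<in> L\<close> L by auto
    then have "b = c" using ab(3) new[of b] by auto
    ultimately show False using ab(1) by simp
  qed
qed

fun bld :: "'a graph \<Rightarrow> ('a \<times> 'a set) list \<Rightarrow> 'a graph" where
  "bld G [] = G"
| "bld G ((c,L) # st) = bld (addstar G c L) st"

fun valid :: "'a graph \<Rightarrow> ('a \<times> 'a set) list \<Rightarrow> bool" where
  "valid G [] = True"
| "valid G ((c,L) # st) = (c \<in> verts G \<and> L \<inter> verts G = {} \<and> finite L \<and> valid (addstar G c L) st)"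

lemma bld_tree: "is_tree G \<Longrightarrow> valid G st \<Longrightarrow> is_tree (bld G st)"
proof (induction st arbitrary: G)
  case Nil then show ?case by simp
next
  case (Cons p st)
  obtain c L where p: "p = (c,L)" by fastforce
  show ?case using Cons.prems Cons.IH[of "addstar G c L"] tree_addstar[of L G c] p by simp
qed

lemma bld_hub: "is_tree G \<Longrightarrow> valid G st \<Longrightarrow> hub (bld G st) v \<Longrightarrow> hub G v \<or> v \<in> fst ` set st"
proof (induction st arbitrary: G)
  case Nil then show ?case by simp
next
  case (Cons p st)
  obtain c L where p: "p = (c,L)" by fastforce
  have t: "is_tree (addstar G c L)" using Cons.prems tree_addstar[of L G c] p by simp
  have "hub (addstar G c L) v \<or> v \<in> fst ` set st" using Cons.IH[OF t] Cons.prems p by simp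
  moreover have "hub (addstar G c L) v \<Longrightarrow> hub G v \<or> v = c"
    using hub_addstar[of G L c v] Cons.prems p unfolding is_tree_def by simp
  ultimately show ?case using p by auto
qed

lemma bld_verts: "verts (bld G st) = verts G \<union> \<Union>(snd ` set st)"
  by (induction G st rule: bld.induct) auto

lemma bld_edges: "edges (bld G st) = edges G \<union> (\<Union>(c,L)\<in>set st. (\<lambda>l. {c,l}) ` L)"
  by (induction G st rule: bld.induct) auto

lemma root_tree: "is_tree ({r}, {})"
proof -
  have g: "is_graph ({r}, {})" unfolding is_graph_def verts_def edges_def by simp
  have c: "connected_graph ({r}, {})"
    unfolding connected_graph_def is_path_def verts_def edges_def
    by (auto intro!: exI[of _ "[r]"])
  have n: "\<nexists>C. is_cycle ({r}, {}) C"
  proof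
    assume "\<exists>C. is_cycle ({r}, {}) C"
    then obtain C where C: "is_cycle ({r}, {}) C" by blast
    then have "length C \<ge> 3" and p: "is_path ({r}, {}) (hd C) (last C) C" unfolding is_cycle_def by auto
    moreover have "{last C, hd C} \<in> edges ({r}, {})" using C unfolding is_cycle_def by blast
    ultimately show False unfolding edges_def by simp
  qed
  show ?thesis unfolding is_tree_def using g c n by (simp add: verts_def)
qed

lemma root_nohub: "\<not> hub ({r}, {}) v"
  unfolding hub_def edges_def by simp

lemma bld_hub_root: "valid ({r},{}) st \<Longrightarrow> hub (bld ({r},{}) st) v \<Longrightarrow> v \<in> fst ` set st"
proof -
  assume a: "valid ({r},{}) st" "hub (bld ({r},{}) st) v"
  have "hub ({r},{}) v \<or> v \<in> fst ` set st" by (rule bld_hub[OF root_tree a])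
  then show ?thesis using root_nohub[of r v] by simp
qed

lemma graph_finite_edges: "is_graph G \<Longrightarrow> finite (edges G)"
proof -
  assume g: "is_graph G"
  have "edges G \<subseteq> Pow (verts G)" using graph_edge_verts[OF g] by blast
  moreover have "finite (verts G)" using g unfolding is_graph_def by blast
  ultimately show ?thesis by (meson finite_Pow_iff finite_subset)
qed

lemma hub_degree:
  assumes "is_graph G" "hub G v" shows "degree G v \<noteq> 1"
proof -
  obtain a b where ab: "a \<noteq> b" "{v,a} \<in> edges G" "{v,b} \<in> edges G" using assms(2) unfolding hub_def by blast
  have f: "finite {e \<in> edges G. v \<in> e}" using graph_finite_edges[OF assms(1)] by simp
  have ne: "{v,a} \<noteq> {v,b}" using ab(1) by (auto simp: doubleton_eq_iff)
  have "{{v,a},{v,b}} \<subseteq> {e \<in> edges G. v \<in> e}" using ab by auto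
  then have "card {{v,a},{v,b}} \<le> card {e \<in> edges G. v \<in> e}" using f by (rule card_mono[rotated])
  then show ?thesis using ne unfolding degree_def by simp
qed

lemma cif_intro:
  assumes st: "\<And>p. p < k \<Longrightarrow> steiner_tree G S (T p)"
    and ed: "\<And>p q. p < q \<Longrightarrow> q < k \<Longrightarrow> edges (T p) \<inter> edges (T q) = {}"
    and vs: "\<And>p q. p < q \<Longrightarrow> q < k \<Longrightarrow> verts (T p) \<inter> verts (T q) = S"
    and hb: "\<And>p v. p < k \<Longrightarrow> hub (T p) v \<Longrightarrow> v \<in> Cn p"
    and cd: "\<And>p q. p < q \<Longrightarrow> q < k \<Longrightarrow> Cn p \<inter> Cn q = {}"
  shows "compl_indep_family G S k T"
proof -
  have "internal P \<inter> internal Q = {}"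
    if pq: "p < q" "q < k" and P: "is_path (T p) x1 x2 P" and Q: "is_path (T q) x1 x2 Q" for p q x1 x2 P Q
  proof -
    have "internal P \<subseteq> Cn p" using path_internal_hub[OF P] hb pq by auto
    moreover have "internal Q \<subseteq> Cn q" using path_internal_hub[OF Q] hb pq by auto
    ultimately show ?thesis using cd[OF pq] by blast
  qed
  then show ?thesis unfolding compl_indep_family_def using st ed vs by blast
qed

lemma steiner_has_edge:
  assumes "steiner_tree G S T" "x \<in> S" "y \<in> S" "x \<noteq> y"
  shows "\<exists>e. e \<in> edges T"
proof -
  have c: "connected_graph T" and sv: "S \<subseteq> verts T" using assms(1) unfolding steiner_tree_def is_tree_def by auto
  obtain P where P: "is_path T x y P" using c sv assms(2,3) unfolding connected_graph_def by blast
  have ne: "P \<noteq> []" and h: "hd P = x" and l: "last P = y" using P unfolding is_path_def by auto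
  have "length P \<noteq> 1"
  proof
    assume "length P = 1"
    then obtain z where "P = [z]" by (cases P) auto
    then show False using h l assms(4) by simp
  qed
  then have "Suc 0 < length P" using ne by (cases P) auto
  then have "{P ! 0, P ! Suc 0} \<in> edges T" using P unfolding is_path_def by blast
  then show ?thesis by blast
qed

lemma kappa_ge:
  assumes cif: "compl_indep_family G S k T" and fin: "finite (edges G)"
    and xy: "x \<in> S" "y \<in> S" "x \<noteq> y"
  shows "k \<le> kappa_star G S"
proof -
  have bd: "k' \<le> card (edges G)" if kk: "k' \<in> {k. \<exists>T. compl_indep_family G S k T}" for k'
  proof -
    obtain T' where T': "compl_indep_family G S k' T'" using kk by blast
    define f where "f p = (SOME e. e \<in> edges (T' p))" for p
    have st: "steiner_tree G S (T' p)" if "p < k'" for p using T' that unfolding compl_indep_family_def by blast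
    have fe: "f p \<in> edges (T' p)" if "p < k'" for p
      using steiner_has_edge[OF st[OF that] xy] unfolding f_def by (meson someI_ex)
    have inj: "inj_on f {..<k'}"
    proof (rule inj_onI)
      fix p q assume p: "p \<in> {..<k'}" and q: "q \<in> {..<k'}" and eq: "f p = f q"
      show "p = q"
      proof (rule ccontr)
        assume "p \<noteq> q"
        then consider "p < q" | "q < p" by linarith
        then show False
        proof cases
          case 1
          then have "edges (T' p) \<inter> edges (T' q) = {}" using T' q unfolding compl_indep_family_def by auto
          moreover have "f p \<in> edges (T' p)" "f q \<in> edges (T' q)" using fe p q by auto
          ultimately show False using eq by auto
        next
          case 2
          then have "edges (T' q) \<inter> edges (T' p) = {}" using T' p unfolding compl_indep_family_def by auto
          moreover have "f p \<in> edges (T' p)" "f q \<in> edges (T' q)" using fe p q by auto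
          ultimately show False using eq by auto
        qed
      qed
    qed
    have "f ` {..<k'} \<subseteq> edges G"
      using fe st unfolding steiner_tree_def subgraph_def by blast
    then have "card (f ` {..<k'}) \<le> card (edges G)" using fin by (rule card_mono[rotated])
    then show ?thesis using card_image[OF inj] by simp
  qed
  have "bdd_above {k. \<exists>T. compl_indep_family G S k T}" using bd by (rule bdd_aboveI)
  moreover have "k \<in> {k. \<exists>T. compl_indep_family G S k T}" using cif by blast
  ultimately show ?thesis unfolding kappa_star_def by (rule cSup_upper[rotated])
qed



lemma G_edge: "a \<in> {1..m1} \<Longrightarrow> c \<in> {1..m2} \<Longrightarrow> {Inl a, Inr c} \<in> edges (complete_bipartite m1 m2)"
  unfolding complete_bipartite_def edges_def by auto

lemma G_edge': "a \<in> {1..m1} \<Longrightarrow> c \<in> {1..m2} \<Longrightarrow> {Inr c, Inl a} \<in> edges (complete_bipartite m1 m2)"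
  using G_edge by (metis insert_commute)

lemma G_verts: "verts (complete_bipartite m1 m2) = Inl ` {1..m1} \<union> Inr ` {1..m2}"
  unfolding complete_bipartite_def verts_def by simp

lemma G_finite: "finite (edges (complete_bipartite m1 m2))"
proof -
  have "edges (complete_bipartite m1 m2) = (\<lambda>(a,c). {Inl a, Inr c}) ` ({1..m1} \<times> {1..m2})"
    unfolding complete_bipartite_def edges_def by fastforce
  then show ?thesis by simp
qed

lemma verts_pair[simp]: "verts (V, E) = V" by (simp add: verts_def)
lemma edges_pair[simp]: "edges (V, E) = E" by (simp add: edges_def)

definition ed :: "nat \<times> nat \<Rightarrow> (nat + nat) set" where
  "ed = (\<lambda>(a,c). {Inl a, Inr c})"

lemma ed_inj: "inj ed"
  unfolding ed_def by (rule injI) (auto simp: doubleton_eq_iff)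

lemma ed_simp[simp]: "ed (a,c) = {Inl a, Inr c}" by (simp add: ed_def)

lemma star_l: "(\<lambda>y. {Inl a, y}) ` (Inr ` A) = ed ` ({a} \<times> A)"
  by (auto simp: image_iff)
lemma star_r: "(\<lambda>x. {Inr c, x}) ` (Inl ` A) = ed ` (A \<times> {c})"
  by (auto simp: image_iff insert_commute)
lemma Inl_diff: "Inl ` A - {Inl a} = Inl ` (A - {a})" by auto
lemma Inr_diff: "Inr ` A - {Inr a} = Inr ` (A - {a})" by auto

definition T1 :: "nat \<Rightarrow> nat \<Rightarrow> nat \<Rightarrow> nat \<Rightarrow> (nat + nat) graph" where
  "T1 m1 i b k = bld ({Inl (m1 - k)}, {})
     [(Inl (m1 - k), Inr ` {1..b} \<union> {Inr (b + 1 + k)}),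
      (Inr (b + 1 + k), Inl ` {1..i} - {Inl (m1 - k)})]"

locale setting =
  fixes m1 m2 i b :: nat
  assumes i2: "2 \<le> i" and im1: "i \<le> m1" and b1: "1 \<le> b" and bm2: "b \<le> m2"
begin

abbreviation "G \<equiv> complete_bipartite m1 m2"
abbreviation "S \<equiv> Inl ` {1..i} \<union> Inr ` {1..b}"

lemma T1_valid: "valid ({Inl (m1 - k)}, {})
     [(Inl (m1 - k), Inr ` {1..b} \<union> {Inr (b + 1 + k)}),
      (Inr (b + 1 + k), Inl ` {1..i} - {Inl (m1 - k)})]"
  by auto

lemma T1_tree: "is_tree (T1 m1 i b k)"
  unfolding T1_def by (rule bld_tree[OF root_tree T1_valid])

lemma T1_verts: "verts (T1 m1 i b k) = S \<union> {Inl (m1 - k), Inr (b + 1 + k)}"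
  unfolding T1_def bld_verts by auto

lemma T1_edges: "edges (T1 m1 i b k) =
   (\<lambda>y. {Inl (m1 - k), y}) ` (Inr ` {1..b} \<union> {Inr (b + 1 + k)}) \<union>
   (\<lambda>x. {Inr (b + 1 + k), x}) ` (Inl ` {1..i} - {Inl (m1 - k)})"
  unfolding T1_def bld_edges by auto

lemma T1_hub: "hub (T1 m1 i b k) v \<Longrightarrow> v \<in> {Inl (m1 - k), Inr (b + 1 + k)}"
  using bld_hub_root[OF T1_valid] unfolding T1_def by auto

lemma T1_steiner:
  assumes k1: "k < m1" and k2: "k < m2 - b"
  shows "steiner_tree G S (T1 m1 i b k)"
proof -
  have t: "is_tree (T1 m1 i b k)" by (rule T1_tree)
  then have g: "is_graph (T1 m1 i b k)" unfolding is_tree_def by blast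
  have hx: "m1 - k \<in> {1..m1}" using k1 by auto
  have yk: "b + 1 + k \<in> {1..m2}" using k2 by auto
  have vs: "verts (T1 m1 i b k) \<subseteq> verts G"
    unfolding T1_verts G_verts using hx yk im1 bm2 by auto
  have es: "edges (T1 m1 i b k) \<subseteq> edges G"
    unfolding T1_edges using hx yk im1 bm2 by (auto intro!: G_edge G_edge')
  have lv: "leaves (T1 m1 i b k) \<subseteq> S"
  proof
    fix v assume v: "v \<in> leaves (T1 m1 i b k)"
    then have vv: "v \<in> verts (T1 m1 i b k)" and d: "degree (T1 m1 i b k) v = 1"
      unfolding leaves_def by auto
    show "v \<in> S"
    proof (rule ccontr)
      assume nS: "v \<notin> S"
      have "hub (T1 m1 i b k) v"
      proof (cases "v = Inr (b + 1 + k)")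
        case True
        obtain x where x: "x \<in> {1..i}" "Inl x \<noteq> Inl (m1 - k)"
        proof (cases "m1 - k = 1")
          case True then show ?thesis using that[of 2] i2 by auto
        next
          case False then show ?thesis using that[of 1] i2 by auto
        qed
        show ?thesis
        proof (rule hubI[of "Inl (m1 - k)" "Inl x"])
          show "{v, Inl (m1 - k)} \<in> edges (T1 m1 i b k)" unfolding T1_edges True by (auto simp: insert_commute)
          show "{v, Inl x} \<in> edges (T1 m1 i b k)" unfolding T1_edges True using x by auto
        qed (use x in auto)
      next
        case False
        then have vx: "v = Inl (m1 - k)" using vv nS unfolding T1_verts by auto
        show ?thesis
        proof (rule hubI[of "Inr 1" "Inr (b + 1 + k)"])
          show "{v, Inr 1} \<in> edges (T1 m1 i b k)" unfolding T1_edges vx using b1 by auto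
          show "{v, Inr (b + 1 + k)} \<in> edges (T1 m1 i b k)" unfolding T1_edges vx by auto
        qed (use b1 in auto)
      qed
      then show False using hub_degree[OF g] d by blast
    qed
  qed
  show ?thesis unfolding steiner_tree_def subgraph_def
    using t g vs es lv unfolding T1_verts by auto
qed

definition P1 :: "nat \<Rightarrow> (nat \<times> nat) set" where
  "P1 k = {m1 - k} \<times> ({1..b} \<union> {b+1+k}) \<union> ({1..i} - {m1 - k}) \<times> {b+1+k}"

lemma T1_edges': "edges (T1 m1 i b k) = ed ` P1 k"
proof -
  have "Inr ` {1..b} \<union> {Inr (b + 1 + k)} = Inr ` ({1..b} \<union> {b+1+k})" by simp
  then show ?thesis unfolding T1_edges P1_def Inl_diff star_l star_r image_Un by simp
qed

lemma T1_edges_disj: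
  assumes "p < q" "q < m1"
  shows "edges (T1 m1 i b p) \<inter> edges (T1 m1 i b q) = {}"
proof -
  have "P1 p \<inter> P1 q = {}" using assms unfolding P1_def by auto
  then show ?thesis unfolding T1_edges' image_Int[OF ed_inj, symmetric] by simp
qed

lemma T1_verts_int:
  assumes "p < q" "q < m1"
  shows "verts (T1 m1 i b p) \<inter> verts (T1 m1 i b q) = S"
  using assms unfolding T1_verts by auto

lemma family1:
  assumes "K \<le> m1" "K \<le> m2 - b"
  shows "compl_indep_family G S K (T1 m1 i b)"
proof (rule cif_intro[where Cn = "\<lambda>k. {Inl (m1 - k), Inr (b + 1 + k)}"])
  fix p assume "p < K" then show "steiner_tree G S (T1 m1 i b p)" using assms T1_steiner by auto
next
  fix p q assume "p < q" "q < K" then show "edges (T1 m1 i b p) \<inter> edges (T1 m1 i b q) = {}"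
    using assms T1_edges_disj by auto
next
  fix p q assume "p < q" "q < K" then show "verts (T1 m1 i b p) \<inter> verts (T1 m1 i b q) = S"
    using assms T1_verts_int by auto
next
  fix p v assume "p < K" "hub (T1 m1 i b p) v" then show "v \<in> {Inl (m1 - p), Inr (b + 1 + p)}"
    using T1_hub by auto
next
  fix p q assume "p < q" "q < K" then show "{Inl (m1 - p), Inr (b + 1 + p)} \<inter> {Inl (m1 - q), Inr (b + 1 + q)} = {}"
    using assms by auto
qed

end

locale setting2 = setting +
  assumes mm: "m1 \<le> m2" and fxb: "m1 - i + b \<le> m2"
begin

definition "fx = m1 - i"
definition "p = i div 2"
definition pidx :: "nat \<Rightarrow> nat" where "pidx q = (if q < b then q + 1 else q + 1 + fx)"
definition "uy j = pidx (p + j)"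
definition "wy j = pidx j"
definition "XB = (\<lambda>l. 2 * l + 2) ` {..<p}"
definition "RbI j = (uy ` ({..<p} - {j}) \<inter> {1..b}) \<union> {wy j}"
definition "RaI j = {1..b} - ({uy j} \<union> RbI j)"
definition "X1 j = {1..i} - (XB - {2 * j + 2})"

definition "stps j = [(Inr (uy j), Inl ` X1 j), (Inl (2 * j + 1), Inr ` RaI j),
    (Inl (2 * j + 2), Inr ` RbI j), (Inr (wy j), Inl ` (XB - {2 * j + 2}))]"
definition "T2 j = bld ({Inr (uy j)}, {}) (stps j)"

lemma pidx_inj[simp]: "pidx q = pidx q' \<longleftrightarrow> q = q'"
  unfolding pidx_def by auto

lemma pidx_S: "pidx q \<in> {1..b} \<longleftrightarrow> q < b"
  unfolding pidx_def by auto

lemma pidx_range: "pidx q \<le> b \<or> b + fx < pidx q"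
  unfolding pidx_def by auto

lemma pidx_pos: "1 \<le> pidx q" unfolding pidx_def by auto

lemma pidx_le: "q < 2 * p \<Longrightarrow> pidx q \<le> m2"
  unfolding pidx_def fx_def p_def using fxb mm im1 by auto

lemma p_le: "2 * p \<le> i" unfolding p_def by auto

lemma XB_odd[simp]: "2 * j + 1 \<notin> XB"
proof
  assume "2 * j + 1 \<in> XB"
  then obtain l where "2 * j + 1 = 2 * l + 2" unfolding XB_def by auto
  then show False by presburger
qed
lemma XB_odd'[simp]: "Suc (2 * j) \<notin> XB" using XB_odd[of j] by simp
lemma XB_iff: "x \<in> XB \<longleftrightarrow> (\<exists>l<p. x = 2 * l + 2)" unfolding XB_def by auto
lemma XB_sub: "XB \<subseteq> {1..i}" unfolding XB_def using p_le by auto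

lemma X1_a: "j < p \<Longrightarrow> 2 * j + 1 \<in> X1 j" unfolding X1_def using p_le by auto
lemma X1_b: "j < p \<Longrightarrow> 2 * j + 2 \<in> X1 j" unfolding X1_def using p_le by auto

lemma uy_ne_wy[simp]: "l < p \<Longrightarrow> uy j \<noteq> wy l" unfolding uy_def wy_def by simp

lemma uy_notin_RbI: "j < p \<Longrightarrow> uy j \<notin> RbI j" unfolding RbI_def uy_def wy_def by auto

lemma XB_fin[simp]: "finite XB" unfolding XB_def by simp
lemma RbI_fin[simp]: "finite (RbI j)" unfolding RbI_def by simp
lemma wy_RbI: "wy j \<in> RbI j" unfolding RbI_def by simp

lemma T2_valid: "j < p \<Longrightarrow> valid ({Inr (uy j)}, {}) (stps j)"
  unfolding stps_def using X1_a X1_b uy_notin_RbI wy_RbI[of j]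
  by (auto simp: RaI_def X1_def)

lemma T2_tree: "j < p \<Longrightarrow> is_tree (T2 j)"
  unfolding T2_def by (rule bld_tree[OF root_tree T2_valid])

lemma L1: "j < p \<Longrightarrow> X1 j \<union> (XB - {2 * j + 2}) = {1..i}"
  unfolding X1_def using XB_sub p_le by auto

lemma RbI_sub: "RbI j \<subseteq> {1..b} \<union> {wy j}" unfolding RbI_def by auto

lemma L2: "insert (uy j) (RaI j \<union> RbI j) = {1..b} \<union> {uy j, wy j}"
  unfolding RaI_def using RbI_sub[of j] wy_RbI[of j] by auto

lemma T2_verts: "j < p \<Longrightarrow> verts (T2 j) = S \<union> {Inr (uy j), Inr (wy j)}"
proof -
  assume j: "j < p"
  have "verts (T2 j) = Inr ` (insert (uy j) (RaI j \<union> RbI j)) \<union> Inl ` (X1 j \<union> (XB - {2 * j + 2}))"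
    unfolding T2_def bld_verts stps_def by auto
  also have "\<dots> = S \<union> {Inr (uy j), Inr (wy j)}" unfolding L1[OF j] L2 by auto
  finally show ?thesis .
qed

definition "P2 j = X1 j \<times> {uy j} \<union> {2 * j + 1} \<times> RaI j \<union> {2 * j + 2} \<times> RbI j \<union> (XB - {2 * j + 2}) \<times> {wy j}"

lemma T2_edges: "edges (T2 j) = ed ` P2 j"
proof -
  have "edges (T2 j) = (\<lambda>x. {Inr (uy j), x}) ` (Inl ` X1 j) \<union> (\<lambda>y. {Inl (2 * j + 1), y}) ` (Inr ` RaI j)
     \<union> (\<lambda>y. {Inl (2 * j + 2), y}) ` (Inr ` RbI j) \<union> (\<lambda>x. {Inr (wy j), x}) ` (Inl ` (XB - {2 * j + 2}))"
    unfolding T2_def bld_edges stps_def by auto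
  then show ?thesis unfolding star_l star_r P2_def image_Un by simp
qed

lemma T2_hub: "j < p \<Longrightarrow> hub (T2 j) v \<Longrightarrow> v \<in> {Inr (uy j), Inl (2 * j + 1), Inl (2 * j + 2), Inr (wy j)}"
  using bld_hub_root[OF T2_valid] unfolding T2_def stps_def by auto

lemma ed_sub: "P \<subseteq> {1..m1} \<times> {1..m2} \<Longrightarrow> ed ` P \<subseteq> edges G"
proof
  fix e assume P: "P \<subseteq> {1..m1} \<times> {1..m2}" and "e \<in> ed ` P"
  then obtain a c where "(a,c) \<in> P" "e = {Inl a, Inr c}" by auto
  then show "e \<in> edges G" using P G_edge[of a m1 c m2] by auto
qed

lemma uy_le: "j < p \<Longrightarrow> uy j \<le> m2" unfolding uy_def by (rule pidx_le) simp
lemma wy_le: "j < p \<Longrightarrow> wy j \<le> m2" unfolding wy_def by (rule pidx_le) simp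
lemma uy_pos: "1 \<le> uy j" unfolding uy_def by (rule pidx_pos)
lemma wy_pos: "1 \<le> wy j" unfolding wy_def by (rule pidx_pos)

lemma T2_steiner:
  assumes j: "j < p"
  shows "steiner_tree G S (T2 j)"
proof -
  have t: "is_tree (T2 j)" using T2_tree[OF j] .
  then have g: "is_graph (T2 j)" unfolding is_tree_def by blast
  have vs: "verts (T2 j) \<subseteq> verts G"
    unfolding T2_verts[OF j] G_verts using uy_le[OF j] wy_le[OF j] uy_pos[of j] wy_pos[of j] im1 bm2 by auto
  have "P2 j \<subseteq> {1..m1} \<times> {1..m2}"
    unfolding P2_def X1_def RaI_def using RbI_sub[of j] XB_sub p_le j im1 bm2 uy_le[OF j] wy_le[OF j]
      uy_pos[of j] wy_pos[of j] by fastforce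
  then have es: "edges (T2 j) \<subseteq> edges G" unfolding T2_edges by (rule ed_sub)
  have lv: "leaves (T2 j) \<subseteq> S"
  proof
    fix v assume v: "v \<in> leaves (T2 j)"
    then have vv: "v \<in> verts (T2 j)" and d: "degree (T2 j) v = 1"
      unfolding leaves_def by auto
    show "v \<in> S"
    proof (rule ccontr)
      assume nS: "v \<notin> S"
      have "hub (T2 j) v"
      proof (cases "v = Inr (uy j)")
        case True
        show ?thesis
        proof (rule hubI[of "Inl (2 * j + 1)" "Inl (2 * j + 2)"])
          have "(2 * j + 1, uy j) \<in> P2 j" unfolding P2_def using X1_a[OF j] by auto
          then show "{v, Inl (2 * j + 1)} \<in> edges (T2 j)" unfolding T2_edges True
            by (metis ed_simp image_eqI insert_commute)
          have "(2 * j + 2, uy j) \<in> P2 j" unfolding P2_def using X1_b[OF j] by auto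
          then show "{v, Inl (2 * j + 2)} \<in> edges (T2 j)" unfolding T2_edges True
            by (metis ed_simp image_eqI insert_commute)
        qed simp
      next
        case False
        then have vw: "v = Inr (wy j)" using vv nS unfolding T2_verts[OF j] by auto
        then have "wy j \<notin> {1..b}" using nS by auto
        then have jb: "b \<le> j" unfolding wy_def pidx_S by simp
        then have j0: "j \<noteq> 0" using b1 by simp
        have p0: "0 < p" using j by simp
        show ?thesis
        proof (rule hubI[of "Inl (2 * j + 2)" "Inl 2"])
          have "(2 * j + 2, wy j) \<in> P2 j" unfolding P2_def using wy_RbI[of j] by auto
          then show "{v, Inl (2 * j + 2)} \<in> edges (T2 j)" unfolding T2_edges vw
            by (metis ed_simp image_eqI insert_commute)
          have "2 \<in> XB" unfolding XB_iff using p0 by auto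
          then have "(2, wy j) \<in> P2 j" unfolding P2_def using j0 by auto
          then show "{v, Inl 2} \<in> edges (T2 j)" unfolding T2_edges vw
            by (metis ed_simp image_eqI insert_commute)
        qed (use j0 in simp)
      qed
      then show False using hub_degree[OF g] d by blast
    qed
  qed
  show ?thesis unfolding steiner_tree_def subgraph_def
    using t g vs es lv unfolding T2_verts[OF j] by auto
qed

lemma odd_even1[simp]: "Suc (2 * j) \<noteq> Suc (Suc (2 * l))" by presburger
lemma odd_even2[simp]: "Suc (Suc (2 * l)) \<noteq> Suc (2 * j)" by presburger

lemma F1: "j \<noteq> l \<Longrightarrow> j < p \<Longrightarrow> uy j \<notin> RaI l"
  unfolding RaI_def RbI_def by auto

lemma F2: "l \<noteq> j \<Longrightarrow> l < p \<Longrightarrow> 2 * l + 2 \<notin> X1 j"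
proof -
  assume a: "l \<noteq> j" "l < p"
  have "2 * l + 2 \<in> XB" unfolding XB_iff using a by auto
  then show ?thesis unfolding X1_def using a by auto
qed

lemma F3: "l < p \<Longrightarrow> wy l \<in> RbI j \<Longrightarrow> l = j"
  unfolding RbI_def wy_def uy_def by auto

lemma RaI_sub: "RaI j \<subseteq> {1..b}" unfolding RaI_def by auto

lemma P2_disj:
  assumes jl: "j \<noteq> l" "j < p" "l < p"
  shows "P2 j \<inter> P2 l = {}"
proof (rule ccontr)
  assume "P2 j \<inter> P2 l \<noteq> {}"
  then obtain x y where xj: "(x,y) \<in> P2 j" and xl: "(x,y) \<in> P2 l" by auto
  have f1: "uy j \<notin> RaI l" "uy l \<notin> RaI j" using F1 jl by auto
  have f2: "2 * l + 2 \<notin> X1 j" "2 * j + 2 \<notin> X1 l" using F2 jl by auto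
  have f3: "wy l \<notin> RbI j" "wy j \<notin> RbI l" using F3 jl by blast+
  have f4: "uy j \<noteq> uy l" "wy j \<noteq> wy l" using jl unfolding uy_def wy_def by auto
  have f5: "uy j \<noteq> wy l" "uy l \<noteq> wy j" using jl by auto
  have f6: "2 * j + 2 \<in> XB" "2 * l + 2 \<in> XB" unfolding XB_iff using jl by auto
  show False using xj xl f1 f2 f3 f4 f5 f6 jl unfolding P2_def by auto
qed

lemma P2_P1_disj:
  assumes j: "j < p" and k: "k < fx"
  shows "P2 j \<inter> P1 k = {}"
proof (rule ccontr)
  assume "P2 j \<inter> P1 k \<noteq> {}"
  then obtain x y where xj: "(x,y) \<in> P2 j" and xk: "(x,y) \<in> P1 k" by auto
  have xi: "x \<le> i" using xj XB_sub p_le j unfolding P2_def X1_def by auto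
  have "i < m1 - k" using k unfolding fx_def by simp
  then have "y = b + 1 + k" using xk xi unfolding P1_def by auto
  moreover have "y \<le> b \<or> b + fx < y" using xj RaI_sub[of j] RbI_sub[of j] pidx_range[of j]
    pidx_range[of "p + j"] unfolding P2_def uy_def wy_def by auto
  ultimately show False using k by simp
qed

definition "F k = (if k < fx then T1 m1 i b k else T2 (k - fx))"
definition "Cn k = (if k < fx then {Inl (m1 - k), Inr (b + 1 + k)}
   else {Inr (uy (k - fx)), Inl (2 * (k - fx) + 1), Inl (2 * (k - fx) + 2), Inr (wy (k - fx))})"

lemma uy_range: "uy j \<le> b \<or> b + fx < uy j" unfolding uy_def by (rule pidx_range)
lemma wy_range: "wy j \<le> b \<or> b + fx < wy j" unfolding wy_def by (rule pidx_range)

lemma family2: "compl_indep_family G S (fx + p) F"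
proof (rule cif_intro[where Cn = Cn])
  fix k assume k: "k < fx + p"
  show "steiner_tree G S (F k)"
  proof (cases "k < fx")
    case True then show ?thesis unfolding F_def using T1_steiner[of k] fxb unfolding fx_def by auto
  next
    case False then show ?thesis unfolding F_def using T2_steiner[of "k - fx"] k by auto
  qed
next
  fix q r assume qr: "q < r" "r < fx + p"
  show "edges (F q) \<inter> edges (F r) = {}"
  proof (cases "r < fx")
    case True then show ?thesis unfolding F_def using T1_edges_disj[of q r] qr unfolding fx_def by auto
  next
    case False
    note rf = False
    show ?thesis
    proof (cases "q < fx")
      case True
      have "P2 (r - fx) \<inter> P1 q = {}" using P2_P1_disj[of "r - fx" q] True qr rf by auto
      then show ?thesis unfolding F_def using True rf
        by (simp add: T1_edges' T2_edges image_Int[OF ed_inj, symmetric] Int_commute)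
    next
      case False
      have "P2 (q - fx) \<inter> P2 (r - fx) = {}" using P2_disj[of "q - fx" "r - fx"] False qr rf by auto
      then show ?thesis unfolding F_def using False rf
        by (simp add: T2_edges image_Int[OF ed_inj, symmetric])
    qed
  qed
next
  fix q r assume qr: "q < r" "r < fx + p"
  show "verts (F q) \<inter> verts (F r) = S"
  proof (cases "r < fx")
    case True then show ?thesis unfolding F_def using T1_verts_int[of q r] qr unfolding fx_def by auto
  next
    case False
    note rf = False
    have r': "r - fx < p" using qr rf by auto
    show ?thesis
    proof (cases "q < fx")
      case True
      then show ?thesis unfolding F_def using True rf T1_verts T2_verts[OF r'] uy_range[of "r - fx"] wy_range[of "r - fx"]
        by auto
    next
      case False
      have q': "q - fx < p" "q - fx \<noteq> r - fx" using qr False rf by auto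
      have "uy (q - fx) \<noteq> uy (r - fx)" "wy (q - fx) \<noteq> wy (r - fx)" using q' unfolding uy_def wy_def by auto
      moreover have "uy (q - fx) \<noteq> wy (r - fx)" "wy (q - fx) \<noteq> uy (r - fx)"
        using uy_ne_wy[of "q - fx" "r - fx"] uy_ne_wy[of "r - fx" "q - fx"] q' r' by metis+
      ultimately show ?thesis unfolding F_def using False rf T2_verts[OF r'] T2_verts[OF q'(1)] by auto
    qed
  qed
next
  fix k v assume k: "k < fx + p" and h: "hub (F k) v"
  show "v \<in> Cn k"
  proof (cases "k < fx")
    case True then show ?thesis using h T1_hub unfolding F_def Cn_def by auto
  next
    case False then show ?thesis using h T2_hub[of "k - fx" v] k unfolding F_def Cn_def by auto
  qed
next
  fix q r assume qr: "q < r" "r < fx + p"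
  show "Cn q \<inter> Cn r = {}"
  proof (cases "r < fx")
    case True then show ?thesis unfolding Cn_def using qr unfolding fx_def by auto
  next
    case False
    note rf = False
    have r': "r - fx < p" using qr rf by auto
    have ri: "2 * (r - fx) + 2 \<le> i" using r' p_le by auto
    show ?thesis
    proof (cases "q < fx")
      case True
      have "i < m1 - q" using True unfolding fx_def by auto
      then show ?thesis unfolding Cn_def using True rf ri uy_range[of "r - fx"] wy_range[of "r - fx"]
        by auto
    next
      case False
      have q': "q - fx < p" "q - fx \<noteq> r - fx" using qr False rf by auto
      have "uy (q - fx) \<noteq> uy (r - fx)" "wy (q - fx) \<noteq> wy (r - fx)" using q' unfolding uy_def wy_def by auto
      moreover have "uy (q - fx) \<noteq> wy (r - fx)" "wy (q - fx) \<noteq> uy (r - fx)"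
        using uy_ne_wy[of "q - fx" "r - fx"] uy_ne_wy[of "r - fx" "q - fx"] q' r' by metis+
      ultimately show ?thesis unfolding Cn_def using False rf q' by auto
    qed
  qed
qed

end
theorem theorem3p7:
  fixes m1 m2 s i :: nat
  assumes "2 \<le> m1" and "m1 \<le> m2"
    and "max 1 (int s - int m2) \<le> int i" and "int i \<le> min (int m1) (int s - 1)"
    and "s \<ge> m2 - m1 + 3"
    and "2 * int i > int m1 + int s - int m2"
  shows "(3 * (2 * int i) \<le> 4 * (int m1 + int s - int m2) \<longrightarrow>
            int (kappa_star (complete_bipartite m1 m2) (S_set s i)) \<ge> int m1 - int i + int i div 2)
       \<and> (4 * (int m1 + int s - int m2) < 3 * (2 * int i) \<and> 2 * int i \<le> 2 * (int m1 + int s - int m2) \<longrightarrow>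
            int (kappa_star (complete_bipartite m1 m2) (S_set s i)) \<ge> int m2 - int s + int i)
       \<and> (2 * int i > 2 * (int m1 + int s - int m2) \<longrightarrow>
            int (kappa_star (complete_bipartite m1 m2) (S_set s i)) \<ge> int m1)"
proof -
  define b where "b = s - i"
  have i1: "1 \<le> i" and iS: "i < s" and im1: "i \<le> m1" and sm: "s \<le> m2 + i" using assms(3,4) by auto
  have i2: "2 \<le> i" using assms(2,5,6) by linarith
  have b1: "1 \<le> b" and bm2: "b \<le> m2" using iS sm unfolding b_def by auto
  have sb: "s = i + b" using iS unfolding b_def by auto
  have fxb: "m1 - i + b \<le> m2" using assms(6) im1 unfolding sb by linarith
  interpret setting2 m1 m2 i b using i2 im1 b1 bm2 assms(2) fxb by unfold_locales auto
  have SS: "S_set s i = S" unfolding S_set_def b_def by simp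
  have xy: "Inl 1 \<in> S" "Inr 1 \<in> S" "Inl 1 \<noteq> (Inr 1 :: nat + nat)" using i1 b1 by auto
  have kg: "K \<le> kappa_star G S" if "compl_indep_family G S K T" for K T
    using kappa_ge[OF that G_finite xy] .
  have c1: "int m1 - int i + int i div 2 \<le> int (kappa_star G S)"
  proof -
    have "fx + p \<le> kappa_star G S" using kg[OF family2] .
    moreover have "int (fx + p) = int m1 - int i + int i div 2" unfolding fx_def p_def using im1
      by (simp add: zdiv_int)
    ultimately show ?thesis by linarith
  qed
  have c2: "int m2 - int s + int i \<le> int (kappa_star G S)"
    if "2 * int i \<le> 2 * (int m1 + int s - int m2)"
  proof -
    have d: "int (m2 - b) = int m2 - int b" using bm2 by simp
    have "int (m2 - b) \<le> int m1" using that unfolding sb d of_nat_add by presburger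
    then have "m2 - b \<le> m1" by linarith
    then have "m2 - b \<le> kappa_star G S" using kg[OF family1[of "m2 - b"]] by simp
    moreover have "int (m2 - b) = int m2 - int b" using bm2 by simp
    ultimately show ?thesis unfolding sb of_nat_add by linarith
  qed
  have c3: "int m1 \<le> int (kappa_star G S)"
    if "2 * int i > 2 * (int m1 + int s - int m2)"
  proof -
    have d: "int (m2 - b) = int m2 - int b" using bm2 by simp
    have "int m1 \<le> int (m2 - b)" using that unfolding sb d of_nat_add by presburger
    then have "m1 \<le> m2 - b" by linarith
    then have "m1 \<le> kappa_star G S" using kg[OF family1[of "m1"]] by simp
    then show ?thesis by linarith
  qed
  show ?thesis unfolding SS using c1 c2 c3 by blast
qed

end
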